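(* The reductions $\to_{ym}$, $\to_{yeAY}$ and $\to_{yeYN}$ are deterministic, and $\to_{ygcv}$ is diamond.
   Context: Terms: $t ::= x \mid \lambda x.t \mid t\,u \mid t[x\backslash u]$ ($t[x\backslash u]$ an explicit substitution binding $x$ in $t$; terms up to $\alpha$). Values $v ::= \lambda x.t$. Substitution contexts $S ::= \langle\cdot\rangle\mid S[x\backslash u]$. For a class of contexts $K$, $K\langle\langle t\rangle\rangle$ is plugging without capture of free variables of $t$. Root rules: $S\langle\lambda x.t\rangle u\mapsto_m S\langle t[x\backslash u]\rangle$; $K\langle\langle x\rangle\rangle[x\backslash u]\mapsto_{e_K} K\langle\langle u\rangle\rangle[x\backslash u]$ ($K$ ranging over the class of contexts); $t[x\backslash S\langle v\rangle]\mapsto_{gcv} S\langle t\rangle$ if $x\notin\mathrm{fv}(t)$. Answers $a ::= v\mid a[x\backslash a']$; name contexts $N ::= \langle\cdot\rangle\mid N t\mid N[x\backslash t]$; auxiliary contexts $A ::= \langle\cdot\rangle\mid a[x\backslash A]\mid A[x\backslash t]$; silly contexts $Y ::= A\langle N\rangle$. $\to_{ym} := Y\langle\mapsto_m\rangle$; $\to_{yeAY} := A\langle\mapsto_{e_Y}\rangle$; $\to_{yeYN} := Y\langle\mapsto_{e_N}\rangle$; $\to_{ygcv}:=Y\langle\mapsto_{gcv}\rangle$. Deterministic: each term has at most one reduct. Diamond: if $u_1\leftarrow t\to u_2$ then $u_1=u_2$ or there is $s$ with $u_1\to s\leftarrow u_2$. *)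

theory Defs
  imports Main
begin

text \<open>Terms up to alpha-equivalence, represented with de Bruijn indices.
  Lam t binds index 0 in t; ESub t u is the explicit substitution t[x\u],
  binding index 0 in t (not in u).\<close>

datatype trm = Var nat | Lam trm | App trm trm | ESub trm trm

fun lift :: "nat \<Rightarrow> nat \<Rightarrow> trm \<Rightarrow> trm" where
  "lift k c (Var i) = (if i < c then Var i else Var (i + k))"
| "lift k c (Lam t) = Lam (lift k (Suc c) t)"
| "lift k c (App t u) = App (lift k c t) (lift k c u)"
| "lift k c (ESub t u) = ESub (lift k (Suc c) t) (lift k c u)"

text \<open>Removing a binder whose variable (index c) does not occur: indices > c go down by one.\<close>
fun lower :: "nat \<Rightarrow> trm \<Rightarrow> trm" where
  "lower c (Var i) = (if i < c then Var i else Var (i - 1))"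
| "lower c (Lam t) = Lam (lower (Suc c) t)"
| "lower c (App t u) = App (lower c t) (lower c u)"
| "lower c (ESub t u) = ESub (lower (Suc c) t) (lower c u)"

fun occ :: "nat \<Rightarrow> trm \<Rightarrow> bool" where
  "occ k (Var i) = (i = k)"
| "occ k (Lam t) = occ (Suc k) t"
| "occ k (App t u) = (occ k t \<or> occ k u)"
| "occ k (ESub t u) = (occ (Suc k) t \<or> occ k u)"

fun is_val :: "trm \<Rightarrow> bool" where
  "is_val (Lam t) = True"
| "is_val _ = False"

inductive is_ans :: "trm \<Rightarrow> bool" where
  "is_val v \<Longrightarrow> is_ans v"
| "is_ans a \<Longrightarrow> is_ans a' \<Longrightarrow> is_ans (ESub a a')"

datatype ctx = Hole | AppL ctx trm | AppR trm ctx | LamC ctx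
  | SubL ctx trm | SubR trm ctx

fun plug :: "ctx \<Rightarrow> trm \<Rightarrow> trm" where
  "plug Hole t = t"
| "plug (AppL C u) t = App (plug C t) u"
| "plug (AppR u C) t = App u (plug C t)"
| "plug (LamC C) t = Lam (plug C t)"
| "plug (SubL C u) t = ESub (plug C t) u"
| "plug (SubR u C) t = ESub u (plug C t)"

fun depth :: "ctx \<Rightarrow> nat" where
  "depth Hole = 0"
| "depth (AppL C u) = depth C"
| "depth (AppR u C) = depth C"
| "depth (LamC C) = Suc (depth C)"
| "depth (SubL C u) = Suc (depth C)"
| "depth (SubR u C) = depth C"

text \<open>Plugging without capture: K<<t>>.\<close>
definition plugnc :: "ctx \<Rightarrow> trm \<Rightarrow> trm" where
  "plugnc C t = plug C (lift (depth C) 0 t)"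

fun comp :: "ctx \<Rightarrow> ctx \<Rightarrow> ctx" where
  "comp Hole D = D"
| "comp (AppL C u) D = AppL (comp C D) u"
| "comp (AppR u C) D = AppR u (comp C D)"
| "comp (LamC C) D = LamC (comp C D)"
| "comp (SubL C u) D = SubL (comp C D) u"
| "comp (SubR u C) D = SubR u (comp C D)"

inductive is_S :: "ctx \<Rightarrow> bool" where
  "is_S Hole"
| "is_S S \<Longrightarrow> is_S (SubL S u)"

inductive is_N :: "ctx \<Rightarrow> bool" where
  "is_N Hole"
| "is_N N \<Longrightarrow> is_N (AppL N t)"
| "is_N N \<Longrightarrow> is_N (SubL N t)"

inductive is_A :: "ctx \<Rightarrow> bool" where
  "is_A Hole"
| "is_ans a \<Longrightarrow> is_A A \<Longrightarrow> is_A (SubR a A)"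
| "is_A A \<Longrightarrow> is_A (SubL A t)"

definition is_Y :: "ctx \<Rightarrow> bool" where
  "is_Y C \<longleftrightarrow> (\<exists>A N. is_A A \<and> is_N N \<and> C = comp A N)"

definition root_m :: "trm \<Rightarrow> trm \<Rightarrow> bool" where
  "root_m t u \<longleftrightarrow> (\<exists>S s w. is_S S \<and> t = App (plug S (Lam s)) w
       \<and> u = plug S (ESub s (lift (depth S) 0 w)))"

definition root_e :: "(ctx \<Rightarrow> bool) \<Rightarrow> trm \<Rightarrow> trm \<Rightarrow> bool" where
  "root_e K t u \<longleftrightarrow> (\<exists>C w. K C \<and> t = ESub (plugnc C (Var 0)) w
       \<and> u = ESub (plugnc C (lift 1 0 w)) w)"

definition root_gcv :: "trm \<Rightarrow> trm \<Rightarrow> bool" where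
  "root_gcv t u \<longleftrightarrow> (\<exists>s S v. is_S S \<and> is_val v \<and> \<not> occ 0 s
       \<and> t = ESub s (plug S v) \<and> u = plugnc S (lower 0 s))"

definition ctx_closure :: "(ctx \<Rightarrow> bool) \<Rightarrow> (trm \<Rightarrow> trm \<Rightarrow> bool) \<Rightarrow> trm \<Rightarrow> trm \<Rightarrow> bool" where
  "ctx_closure K R t u \<longleftrightarrow> (\<exists>C t' u'. K C \<and> R t' u' \<and> t = plug C t' \<and> u = plug C u')"

definition ym :: "trm \<Rightarrow> trm \<Rightarrow> bool" where "ym = ctx_closure is_Y root_m"
definition yeAY :: "trm \<Rightarrow> trm \<Rightarrow> bool" where "yeAY = ctx_closure is_A (root_e is_Y)"
definition yeYN :: "trm \<Rightarrow> trm \<Rightarrow> bool" where "yeYN = ctx_closure is_Y (root_e is_N)"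
definition ygcv :: "trm \<Rightarrow> trm \<Rightarrow> bool" where "ygcv = ctx_closure is_Y root_gcv"

definition deterministic :: "('a \<Rightarrow> 'a \<Rightarrow> bool) \<Rightarrow> bool" where
  "deterministic R \<longleftrightarrow> (\<forall>t u1 u2. R t u1 \<longrightarrow> R t u2 \<longrightarrow> u1 = u2)"

definition diamond :: "('a \<Rightarrow> 'a \<Rightarrow> bool) \<Rightarrow> bool" where
  "diamond R \<longleftrightarrow> (\<forall>t u1 u2. R t u1 \<longrightarrow> R t u2 \<longrightarrow> u1 = u2 \<or> (\<exists>s. R u1 s \<and> R u2 s))"

end

theory Submission
  imports Defs
begin

lemma is_S_simps[simp]:
  "is_S Hole" "is_S (SubL C t) = is_S C" "\<not> is_S (AppL C t)" "\<not> is_S (AppR t C)"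
  "\<not> is_S (LamC C)" "\<not> is_S (SubR t C)"
  by (auto intro: is_S.intros elim: is_S.cases)

lemma is_N_simps[simp]:
  "is_N Hole" "is_N (SubL C t) = is_N C" "is_N (AppL C t) = is_N C" "\<not> is_N (AppR t C)"
  "\<not> is_N (LamC C)" "\<not> is_N (SubR t C)"
  by (auto intro: is_N.intros elim: is_N.cases)

lemma is_A_simps[simp]:
  "is_A Hole" "is_A (SubL C t) = is_A C" "is_A (SubR a C) = (is_ans a \<and> is_A C)"
  "\<not> is_A (AppL C t)" "\<not> is_A (AppR t C)" "\<not> is_A (LamC C)"
  by (auto intro: is_A.intros elim: is_A.cases)

lemma is_ans_simps[simp]:
  "is_ans (Lam t)" "\<not> is_ans (Var i)" "\<not> is_ans (App t u)"
  "is_ans (ESub a b) = (is_ans a \<and> is_ans b)"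
  by (auto intro: is_ans.intros elim: is_ans.cases)

lemma comp_Hole_right[simp]: "comp C Hole = C" by (induction C) auto
lemma plug_comp[simp]: "plug (comp C D) t = plug C (plug D t)" by (induction C) auto
lemma depth_comp[simp]: "depth (comp C D) = depth C + depth D" by (induction C) auto

lemma is_Y_Hole[simp]: "is_Y Hole"
  unfolding is_Y_def by (rule exI[of _ Hole], rule exI[of _ Hole]) auto

lemma is_Y_SubL[simp]: "is_Y (SubL C t) = is_Y C"
proof
  assume "is_Y (SubL C t)"
  then obtain A N where h: "is_A A" "is_N N" "SubL C t = comp A N" by (auto simp: is_Y_def)
  show "is_Y C"
  proof (cases A)
    case Hole
    with h show ?thesis unfolding is_Y_def
      by (intro exI[of _ Hole] exI[of _ C]) auto
  next
    case (SubL A' t')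
    with h show ?thesis unfolding is_Y_def
      by (intro exI[of _ A'] exI[of _ N]) auto
  qed (use h in auto)
next
  assume "is_Y C"
  then obtain A N where h: "is_A A" "is_N N" "C = comp A N" by (auto simp: is_Y_def)
  then show "is_Y (SubL C t)" unfolding is_Y_def
    by (intro exI[of _ "SubL A t"] exI[of _ N]) auto
qed

lemma is_Y_SubR[simp]: "is_Y (SubR a C) = (is_ans a \<and> is_Y C)"
proof
  assume "is_Y (SubR a C)"
  then obtain A N where h: "is_A A" "is_N N" "SubR a C = comp A N" by (auto simp: is_Y_def)
  show "is_ans a \<and> is_Y C"
  proof (cases A)
    case (SubR a' A')
    with h have "is_ans a" "is_A A'" "C = comp A' N" by auto
    with h show ?thesis unfolding is_Y_def by blast
  qed (use h in \<open>auto elim: is_N.cases\<close>)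
next
  assume "is_ans a \<and> is_Y C"
  then obtain A N where h: "is_ans a" "is_A A" "is_N N" "C = comp A N" by (auto simp: is_Y_def)
  then show "is_Y (SubR a C)" unfolding is_Y_def
    by (intro exI[of _ "SubR a A"] exI[of _ N]) auto
qed

lemma is_Y_AppL[simp]: "is_Y (AppL C t) = is_N C"
proof
  assume "is_Y (AppL C t)"
  then obtain A N where h: "is_A A" "is_N N" "AppL C t = comp A N" by (auto simp: is_Y_def)
  then show "is_N C" by (cases A) auto
next
  assume "is_N C"
  then show "is_Y (AppL C t)" unfolding is_Y_def
    by (intro exI[of _ Hole] exI[of _ "AppL C t"]) auto
qed

lemma AN_not: "is_A A \<Longrightarrow> is_N N \<Longrightarrow> comp A N \<noteq> LamC C \<and> comp A N \<noteq> AppR t C"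
  by (induction A) (cases N; auto)+

lemma is_Y_other[simp]: "\<not> is_Y (AppR t C)" "\<not> is_Y (LamC C)"
  unfolding is_Y_def using AN_not by metis+

lemma N_Y: "is_N C \<Longrightarrow> is_Y C" by (induction C) auto
lemma A_Y: "is_A C \<Longrightarrow> is_Y C" by (induction C) auto
lemma S_N: "is_S C \<Longrightarrow> is_N C" by (induction C) auto
lemma S_Y: "is_S C \<Longrightarrow> is_Y C" by (induction C) auto
lemma A_comp_Y: "is_A A \<Longrightarrow> is_Y C \<Longrightarrow> is_Y (comp A C)" by (induction A) auto
lemma N_comp_N: "is_N A \<Longrightarrow> is_N C \<Longrightarrow> is_N (comp A C)" by (induction A) auto
lemma Y_comp_N: "is_Y A \<Longrightarrow> is_N C \<Longrightarrow> is_Y (comp A C)" by (induction A) (auto simp: N_Y N_comp_N)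

lemma ans_plug: "is_Y C \<Longrightarrow> is_ans (plug C r) \<Longrightarrow> is_ans r"
  by (induction C) auto

lemma S_inj: "is_S S1 \<Longrightarrow> is_S S2 \<Longrightarrow> plug S1 (Lam s1) = plug S2 (Lam s2) \<Longrightarrow> S1 = S2 \<and> s1 = s2"
  by (induction S1 arbitrary: S2) (case_tac S2; auto)+

lemma SN_ne: "is_S S \<Longrightarrow> is_N N \<Longrightarrow> plug S (Lam s) \<noteq> plug N (App a b)"
  by (induction S arbitrary: N) (case_tac N; auto)+

lemma SN_ne': "is_S S \<Longrightarrow> is_N N \<Longrightarrow> plug N (App a b) \<noteq> plug S (Lam s)"
  using SN_ne by metis

lemma M_uniq:
  "is_Y C1 \<Longrightarrow> is_Y C2 \<Longrightarrow> is_S S1 \<Longrightarrow> is_S S2 \<Longrightarrow>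
   plug C1 (App (plug S1 (Lam s1)) w1) = plug C2 (App (plug S2 (Lam s2)) w2) \<Longrightarrow>
   C1 = C2 \<and> S1 = S2 \<and> s1 = s2 \<and> w1 = w2"
proof (induction C1 arbitrary: C2)
  case Hole
  then show ?case
    by (cases C2) (auto dest: S_inj SN_ne)
next
  case (AppL C1 t)
  then show ?case
    by (cases C2) (auto dest: SN_ne' N_Y)
next
  case (SubL C1 t)
  then show ?case
    by (cases C2) (auto dest: ans_plug)
next
  case (SubR a C1)
  then show ?case
    by (cases C2) (auto dest: ans_plug)
qed auto

lemma VarU: "is_Y C1 \<Longrightarrow> is_Y C2 \<Longrightarrow> plug C1 (Var i) = plug C2 (Var j) \<Longrightarrow> C1 = C2 \<and> i = j"
proof (induction C1 arbitrary: C2)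
  case Hole
  then show ?case by (cases C2) auto
next
  case (AppL C1 t)
  then show ?case by (cases C2) (auto dest: N_Y)
next
  case (SubL C1 t)
  then show ?case by (cases C2) (auto dest: ans_plug)
next
  case (SubR a C1)
  then show ?case by (cases C2) (auto dest: ans_plug)
qed auto

lemma VarU_depth:
  assumes "is_Y C1" "is_Y (comp A (SubL C2 w))"
    "plug C1 (Var (depth C1)) = plug A (ESub (plug C2 (Var (depth C2))) w)"
  shows False
proof -
  have h: "C1 = comp A (SubL C2 w) \<and> depth C1 = depth C2"
    using VarU[OF assms(1,2)] assms(3) by simp
  then have h1: "C1 = comp A (SubL C2 w)" and h2: "depth C1 = depth C2" by blast+
  from h1 have "depth C1 = depth A + Suc (depth C2)" by simp
  with h2 show False by linarith
qed

lemma noans_Var: "is_Y C \<Longrightarrow> \<not> is_ans (plug C (Var i))"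
  using ans_plug by fastforce
lemma noans_VarN: "is_N C \<Longrightarrow> \<not> is_ans (plug C (Var i))"
  using noans_Var N_Y by blast
lemma noans_A: "is_A A \<Longrightarrow> is_Y C \<Longrightarrow> \<not> is_ans (plug A (ESub (plug C (Var i)) w))"
  using ans_plug[OF A_Y] noans_Var by fastforce
lemma noans_YN: "is_Y A \<Longrightarrow> is_N C \<Longrightarrow> \<not> is_ans (plug A (ESub (plug C (Var i)) w))"
  using ans_plug noans_VarN by fastforce

lemma E_A:
  "is_A A1 \<Longrightarrow> is_A A2 \<Longrightarrow> is_Y C1 \<Longrightarrow> is_Y C2 \<Longrightarrow>
   plug A1 (ESub (plug C1 (Var (depth C1))) w1) = plug A2 (ESub (plug C2 (Var (depth C2))) w2) \<Longrightarrow>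
   A1 = A2 \<and> C1 = C2 \<and> w1 = w2"
proof (induction A1 arbitrary: A2)
  case Hole
  show ?case
  proof (cases A2)
    case Hole
    with Hole.prems show ?thesis by (auto dest: VarU)
  next
    case (SubL A' t)
    with Hole.prems have "is_Y (comp A' (SubL C2 w2))" by (auto intro: A_comp_Y)
    with Hole.prems SubL show ?thesis using VarU_depth[of C1 A' C2 w2] by auto
  qed (use Hole.prems in \<open>auto dest: noans_A noans_Var\<close>)
next
  case (SubL A1 t)
  show ?case
  proof (cases A2)
    case Hole
    with SubL.prems have "is_Y (comp A1 (SubL C1 w1))" by (auto intro: A_comp_Y)
    with SubL.prems Hole show ?thesis using VarU_depth[of C2 A1 C1 w1] by auto
  qed (use SubL in \<open>auto dest: noans_A noans_Var\<close>)
next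
  case (SubR a A1)
  then show ?case by (cases A2) (auto dest: noans_A noans_Var)
qed auto

lemma E_Y:
  "is_Y A1 \<Longrightarrow> is_Y A2 \<Longrightarrow> is_N C1 \<Longrightarrow> is_N C2 \<Longrightarrow>
   plug A1 (ESub (plug C1 (Var (depth C1))) w1) = plug A2 (ESub (plug C2 (Var (depth C2))) w2) \<Longrightarrow>
   A1 = A2 \<and> C1 = C2 \<and> w1 = w2"
proof (induction A1 arbitrary: A2)
  case Hole
  show ?case
  proof (cases A2)
    case Hole
    with Hole.prems show ?thesis by (auto dest: VarU N_Y)
  next
    case (SubL A' t)
    with Hole.prems have "is_Y (comp A' (SubL C2 w2))" by (auto intro: Y_comp_N)
    with Hole.prems SubL show ?thesis using VarU_depth[of C1 A' C2 w2] N_Y by auto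
  qed (use Hole.prems in \<open>auto dest: noans_YN noans_VarN\<close>)
next
  case (SubL A1 t)
  show ?case
  proof (cases A2)
    case Hole
    with SubL.prems have "is_Y (comp A1 (SubL C1 w1))" by (auto intro: Y_comp_N)
    with SubL.prems Hole show ?thesis using VarU_depth[of C2 A1 C1 w1] N_Y by auto
  qed (use SubL in \<open>auto dest: noans_YN noans_VarN\<close>)
next
  case (SubR a A1)
  then show ?case by (cases A2) (auto dest: noans_YN noans_VarN)
next
  case (AppL A1 t)
  then show ?case by (cases A2) (auto dest: N_Y)
qed auto

lemma plugnc_Var0[simp]: "plugnc C (Var 0) = plug C (Var (depth C))"
  by (simp add: plugnc_def)

lemma det_ym: "deterministic ym"
  unfolding deterministic_def ym_def ctx_closure_def root_m_def
  using M_uniq by metis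

lemma det_yeAY: "deterministic yeAY"
  unfolding deterministic_def yeAY_def ctx_closure_def root_e_def plugnc_Var0
  using E_A by metis

lemma det_yeYN: "deterministic yeYN"
  unfolding deterministic_def yeYN_def ctx_closure_def root_e_def plugnc_Var0
  using E_Y by metis

fun liftC :: "nat \<Rightarrow> nat \<Rightarrow> ctx \<Rightarrow> ctx" where
  "liftC k c Hole = Hole"
| "liftC k c (AppL C u) = AppL (liftC k c C) (lift k c u)"
| "liftC k c (AppR u C) = AppR (lift k c u) (liftC k c C)"
| "liftC k c (LamC C) = LamC (liftC k (Suc c) C)"
| "liftC k c (SubL C u) = SubL (liftC k (Suc c) C) (lift k c u)"
| "liftC k c (SubR u C) = SubR (lift k (Suc c) u) (liftC k c C)"

fun lowerC :: "nat \<Rightarrow> ctx \<Rightarrow> ctx" where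
  "lowerC c Hole = Hole"
| "lowerC c (AppL C u) = AppL (lowerC c C) (lower c u)"
| "lowerC c (AppR u C) = AppR (lower c u) (lowerC c C)"
| "lowerC c (LamC C) = LamC (lowerC (Suc c) C)"
| "lowerC c (SubL C u) = SubL (lowerC (Suc c) C) (lower c u)"
| "lowerC c (SubR u C) = SubR (lower (Suc c) u) (lowerC c C)"

lemma lift_plug: "lift k c (plug C t) = plug (liftC k c C) (lift k (c + depth C) t)"
  by (induction C arbitrary: c) auto
lemma lower_plug: "lower c (plug C t) = plug (lowerC c C) (lower (c + depth C) t)"
  by (induction C arbitrary: c) auto
lemma depth_liftC[simp]: "depth (liftC k c C) = depth C"
  by (induction C arbitrary: c) auto
lemma depth_lowerC[simp]: "depth (lowerC c C) = depth C"
  by (induction C arbitrary: c) auto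
lemma is_S_liftC[simp]: "is_S (liftC k c C) = is_S C"
  by (induction C arbitrary: c) auto
lemma is_S_lowerC[simp]: "is_S (lowerC c C) = is_S C"
  by (induction C arbitrary: c) auto
lemma is_S_comp: "is_S A \<Longrightarrow> is_S B \<Longrightarrow> is_S (comp A B)"
  by (induction A) auto

lemma is_val_lift[simp]: "is_val (lift k c v) = is_val v" by (cases v) auto
lemma is_val_lower[simp]: "is_val (lower c v) = is_val v" by (cases v) auto

lemma ans_lift: "is_ans a \<Longrightarrow> is_ans (lift k c a)"
  by (induction a arbitrary: c) auto
lemma ans_lower: "is_ans a \<Longrightarrow> is_ans (lower c a)"
  by (induction a arbitrary: c) auto

lemma T1: "c \<le> k \<Longrightarrow> occ (k + d) (lift d c x) = occ k x"
proof (induction x arbitrary: k c)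
  case (Lam x) then show ?case using Lam.IH[of "Suc c" "Suc k"] by simp
next
  case (ESub x1 x2) then show ?case using ESub.IH(1)[of "Suc c" "Suc k"] ESub.IH(2)[of c k] by simp
qed auto

lemma T1b: "c \<le> k \<Longrightarrow> k < c + d \<Longrightarrow> \<not> occ k (lift d c x)"
  by (induction x arbitrary: k c) auto
lemma T1c: "k < c \<Longrightarrow> occ k (lift d c x) = occ k x"
  by (induction x arbitrary: k c) auto
lemma T2: "\<not> occ c s \<Longrightarrow> occ k (lower c s) \<Longrightarrow> (k < c \<and> occ k s) \<or> (c \<le> k \<and> occ (Suc k) s)"
  by (induction s arbitrary: k c) (auto split: if_splits)
lemma T3: "\<not> occ j s \<Longrightarrow> j \<le> c \<Longrightarrow> lower j (lift k (Suc c) s) = lift k c (lower j s)"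
  by (induction s arbitrary: j c) auto
lemma T4: "c \<le> j \<Longrightarrow> lift k (j + d) (lift d c x) = lift d c (lift k j x)"
proof (induction x arbitrary: c j)
  case (Lam x) then show ?case using Lam.IH[of "Suc c" "Suc j"] by simp
next
  case (ESub x1 x2) then show ?case using ESub.IH(1)[of "Suc c" "Suc j"] ESub.IH(2)[of c j] by simp
qed auto

lemma T5: "\<not> occ j x \<Longrightarrow> c \<le> j \<Longrightarrow> lower (j + d) (lift d c x) = lift d c (lower j x)"
proof (induction x arbitrary: c j)
  case (Lam x) then show ?case using Lam.IH[where c="Suc c" and j="Suc j"] by simp
next
  case (ESub x1 x2) then show ?case using ESub.IH(1)[where c="Suc c" and j="Suc j"] ESub.IH(2)[where c=c and j=j] by simp
qed auto

lemma T6: "\<not> occ j s \<Longrightarrow> \<not> occ (Suc c) s \<Longrightarrow> j \<le> c \<Longrightarrow> lower j (lower (Suc c) s) = lower c (lower j s)"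
  by (induction s arbitrary: j c) auto
lemma T7: "lower (k + c) (lift (Suc k) c x) = lift k c x"
proof (induction x arbitrary: c)
  case (Lam x) then show ?case using Lam.IH[of "Suc c"] by simp
next
  case (ESub x1 x2) then show ?case using ESub.IH(1)[of "Suc c"] ESub.IH(2)[of c] by simp
qed auto

lemma T8: "lift k (j + c) (lift j c x) = lift (k + j) c x"
proof (induction x arbitrary: c)
  case (Lam x) then show ?case using Lam.IH[of "Suc c"] by simp
next
  case (ESub x1 x2) then show ?case using ESub.IH(1)[of "Suc c"] ESub.IH(2)[of c] by simp
qed auto

lemma T9: "lift k c (lift j c r) = lift (k + j) c r"
  by (induction r arbitrary: c) auto

lemma OS: "is_S S \<Longrightarrow> occ k (plug S r) \<Longrightarrow> \<not> occ (k + depth S) r \<Longrightarrow> occ k (plug S r')"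
  by (induction S arbitrary: k) auto
lemma occ_plug_hole: "occ (k + depth C) t \<Longrightarrow> occ k (plug C t)"
  by (induction C arbitrary: k) auto

inductive Nc :: "(trm \<Rightarrow> trm \<Rightarrow> bool) \<Rightarrow> trm \<Rightarrow> trm \<Rightarrow> bool" for R where
  Nroot: "R t u \<Longrightarrow> Nc R t u"
| Nsubl: "Nc R t u \<Longrightarrow> Nc R (ESub t w) (ESub u w)"
| Nappl: "Nc R t u \<Longrightarrow> Nc R (App t w) (App u w)"

inductive Yc :: "(trm \<Rightarrow> trm \<Rightarrow> bool) \<Rightarrow> trm \<Rightarrow> trm \<Rightarrow> bool" for R where
  Yroot: "R t u \<Longrightarrow> Yc R t u"
| Ysubl: "Yc R t u \<Longrightarrow> Yc R (ESub t w) (ESub u w)"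
| Ysubr: "is_ans a \<Longrightarrow> Yc R t u \<Longrightarrow> Yc R (ESub a t) (ESub a u)"
| Yappl: "Nc R t u \<Longrightarrow> Yc R (App t w) (App u w)"

lemma Nc_ctx: "is_N C \<Longrightarrow> R t u \<Longrightarrow> Nc R (plug C t) (plug C u)"
  by (induction C) (auto intro: Nc.intros)
lemma Yc_ctx: "is_Y C \<Longrightarrow> R t u \<Longrightarrow> Yc R (plug C t) (plug C u)"
  by (induction C) (auto intro: Yc.intros Nc_ctx)
lemma Nc_ex: "Nc R t u \<Longrightarrow> \<exists>C t' u'. is_N C \<and> R t' u' \<and> t = plug C t' \<and> u = plug C u'"
proof (induction rule: Nc.induct)
  case (Nroot t u) then show ?case by (intro exI[of _ Hole]) auto
next
  case (Nsubl t u w)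
  then obtain C t' u' where "is_N C" "R t' u'" "t = plug C t'" "u = plug C u'" by blast
  then show ?case by (intro exI[of _ "SubL C w"]) auto
next
  case (Nappl t u w)
  then obtain C t' u' where "is_N C" "R t' u'" "t = plug C t'" "u = plug C u'" by blast
  then show ?case by (intro exI[of _ "AppL C w"]) auto
qed
lemma Yc_ex: "Yc R t u \<Longrightarrow> \<exists>C t' u'. is_Y C \<and> R t' u' \<and> t = plug C t' \<and> u = plug C u'"
proof (induction rule: Yc.induct)
  case (Yroot t u) then show ?case by (intro exI[of _ Hole]) auto
next
  case (Ysubl t u w)
  then obtain C t' u' where "is_Y C" "R t' u'" "t = plug C t'" "u = plug C u'" by blast
  then show ?case by (intro exI[of _ "SubL C w"]) auto
next
  case (Ysubr a t u)
  then obtain C t' u' where "is_Y C" "R t' u'" "t = plug C t'" "u = plug C u'" by blast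
  with Ysubr show ?case by (intro exI[of _ "SubR a C"]) auto
next
  case (Yappl t u w)
  then obtain C t' u' where "is_N C" "R t' u'" "t = plug C t'" "u = plug C u'" using Nc_ex by blast
  then show ?case by (intro exI[of _ "AppL C w"]) auto
qed

lemma ygcv_Yc: "ygcv = Yc root_gcv"
  unfolding ygcv_def ctx_closure_def
  using Yc_ctx[of _ root_gcv] Yc_ex[of root_gcv] by (intro ext iffI) blast+

lemma root_gcv_iff: "root_gcv t u \<longleftrightarrow> (\<exists>s S v. is_S S \<and> is_val v \<and> \<not> occ 0 s
   \<and> t = ESub s (plug S v) \<and> u = plug S (lift (depth S) 0 (lower 0 s)))"
  by (simp add: root_gcv_def plugnc_def)

lemma Nc_Yc: "Nc R t u \<Longrightarrow> Yc R t u"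
  by (induction rule: Nc.induct) (auto intro: Yc.intros Nc.intros)

lemma root_occ: "root_gcv t t' \<Longrightarrow> occ k t' \<Longrightarrow> occ k t"
proof -
  assume "root_gcv t t'" "occ k t'"
  then obtain s S v where h: "is_S S" "is_val v" "\<not> occ 0 s" "t = ESub s (plug S v)"
    "t' = plug S (lift (depth S) 0 (lower 0 s))" unfolding root_gcv_iff by blast
  show "occ k t"
  proof (cases "occ (k + depth S) (lift (depth S) 0 (lower 0 s))")
    case True
    then have "occ k (lower 0 s)" using T1[of 0 k "depth S"] by simp
    then have "occ (Suc k) s" using T2[OF h(3)] by auto
    then show ?thesis using h by simp
  next
    case False
    then have "occ k (plug S v)" using OS[OF h(1)] \<open>occ k t'\<close> h(5) by blast
    then show ?thesis using h by simp
  qed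
qed

lemma Nc_occ: "Nc root_gcv t t' \<Longrightarrow> occ k t' \<Longrightarrow> occ k t"
proof (induction arbitrary: k rule: Nc.induct)
  case (Nroot t u) then show ?case using root_occ by blast
qed auto

lemma Yc_occ: "Yc root_gcv t t' \<Longrightarrow> occ k t' \<Longrightarrow> occ k t"
proof (induction arbitrary: k rule: Yc.induct)
  case (Yroot t u) then show ?case using root_occ by blast
next
  case (Yappl t u w) then show ?case using Nc_occ by auto
qed auto

lemma root_lift: "root_gcv t t' \<Longrightarrow> root_gcv (lift k c t) (lift k c t')"
proof -
  assume "root_gcv t t'"
  then obtain s S v where h: "is_S S" "is_val v" "\<not> occ 0 s" "t = ESub s (plug S v)"
    "t' = plug S (lift (depth S) 0 (lower 0 s))" unfolding root_gcv_iff by blast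
  let ?d = "depth S"
  have e1: "lift k c t = ESub (lift k (Suc c) s) (plug (liftC k c S) (lift k (c + ?d) v))"
    using h by (simp add: lift_plug)
  have "lift k c t' = plug (liftC k c S) (lift k (c + ?d) (lift ?d 0 (lower 0 s)))"
    using h by (simp add: lift_plug)
  also have "lift k (c + ?d) (lift ?d 0 (lower 0 s)) = lift ?d 0 (lift k c (lower 0 s))"
    using T4[of 0 c k ?d "lower 0 s"] by simp
  also have "lift k c (lower 0 s) = lower 0 (lift k (Suc c) s)"
    using T3[OF h(3), of c k] by simp
  finally have e2: "lift k c t' = plug (liftC k c S) (lift (depth (liftC k c S)) 0 (lower 0 (lift k (Suc c) s)))"
    by simp
  have "\<not> occ 0 (lift k (Suc c) s)" using T1c[of 0 "Suc c" k s] h(3) by simp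
  then show ?thesis unfolding root_gcv_iff using e1 e2 h(1,2)
    by (intro exI[of _ "lift k (Suc c) s"] exI[of _ "liftC k c S"] exI[of _ "lift k (c + depth S) v"]) simp
qed

lemma root_lower: "root_gcv t t' \<Longrightarrow> \<not> occ c t \<Longrightarrow> root_gcv (lower c t) (lower c t')"
proof -
  assume "root_gcv t t'" and nc: "\<not> occ c t"
  then obtain s S v where h: "is_S S" "is_val v" "\<not> occ 0 s" "t = ESub s (plug S v)"
    "t' = plug S (lift (depth S) 0 (lower 0 s))" unfolding root_gcv_iff by blast
  let ?d = "depth S"
  have ns: "\<not> occ (Suc c) s" using nc h by simp
  have e1: "lower c t = ESub (lower (Suc c) s) (plug (lowerC c S) (lower (c + ?d) v))"
    using h by (simp add: lower_plug)
  have "lower c t' = plug (lowerC c S) (lower (c + ?d) (lift ?d 0 (lower 0 s)))"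
    using h by (simp add: lower_plug)
  also have "lower (c + ?d) (lift ?d 0 (lower 0 s)) = lift ?d 0 (lower c (lower 0 s))"
  proof -
    have "\<not> occ c (lower 0 s)" using T2[OF h(3), of c] ns by auto
    then show ?thesis using T5[of c "lower 0 s" 0 ?d] by simp
  qed
  also have "lower c (lower 0 s) = lower 0 (lower (Suc c) s)"
    using T6[OF h(3) ns] by simp
  finally have e2: "lower c t' = plug (lowerC c S) (lift (depth (lowerC c S)) 0 (lower 0 (lower (Suc c) s)))"
    by simp
  have "\<not> occ 0 (lower (Suc c) s)" using T2[OF ns, of 0] h(3) by auto
  then show ?thesis unfolding root_gcv_iff using e1 e2 h(1,2)
    by (intro exI[of _ "lower (Suc c) s"] exI[of _ "lowerC c S"] exI[of _ "lower (c + depth S) v"]) simp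
qed

lemma Nc_lift: "Nc root_gcv t t' \<Longrightarrow> Nc root_gcv (lift k c t) (lift k c t')"
  by (induction arbitrary: c rule: Nc.induct) (auto intro: Nc.intros root_lift)
lemma Yc_lift: "Yc root_gcv t t' \<Longrightarrow> Yc root_gcv (lift k c t) (lift k c t')"
  by (induction arbitrary: c rule: Yc.induct) (auto intro: Yc.intros root_lift Nc_lift ans_lift)
lemma Nc_lower: "Nc root_gcv t t' \<Longrightarrow> \<not> occ c t \<Longrightarrow> Nc root_gcv (lower c t) (lower c t')"
  by (induction arbitrary: c rule: Nc.induct) (auto intro: Nc.intros root_lower)
lemma Yc_lower: "Yc root_gcv t t' \<Longrightarrow> \<not> occ c t \<Longrightarrow> Yc root_gcv (lower c t) (lower c t')"
  by (induction arbitrary: c rule: Yc.induct) (auto intro: Yc.intros root_lower Nc_lower ans_lower)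

lemma val_not_ESub: "is_val v \<Longrightarrow> v \<noteq> ESub a b" by (cases v) auto

lemma SV_inj: "is_S S1 \<Longrightarrow> is_S S2 \<Longrightarrow> is_val v1 \<Longrightarrow> is_val v2 \<Longrightarrow>
   plug S1 v1 = plug S2 v2 \<Longrightarrow> S1 = S2 \<and> v1 = v2"
proof (induction S1 arbitrary: S2)
  case Hole then show ?case by (cases S2) (simp_all add: val_not_ESub)
next
  case (SubL S1 u)
  show ?case
  proof (cases S2)
    case Hole then show ?thesis using SubL.prems by (cases v2) auto
  next
    case (SubL S2' u')
    then have "plug S1 v1 = plug S2' v2" "u = u'" "is_S S1" "is_S S2'" using SubL.prems by simp_all
    then show ?thesis using SubL.IH[of S2'] SubL.prems \<open>S2 = _\<close> by simp
  qed (use SubL.prems in simp_all)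
qed simp_all

lemma root_det: "root_gcv t u1 \<Longrightarrow> root_gcv t u2 \<Longrightarrow> u1 = u2"
proof -
  assume "root_gcv t u1" "root_gcv t u2"
  then obtain s1 S1 v1 s2 S2 v2 where h: "is_S S1" "is_val v1" "t = ESub s1 (plug S1 v1)"
    "u1 = plug S1 (lift (depth S1) 0 (lower 0 s1))"
    "is_S S2" "is_val v2" "t = ESub s2 (plug S2 v2)"
    "u2 = plug S2 (lift (depth S2) 0 (lower 0 s2))" unfolding root_gcv_iff by metis
  then have "s1 = s2" "plug S1 v1 = plug S2 v2" by simp_all
  with SV_inj[OF h(1) h(5) h(2) h(6)] have "S1 = S2" by simp
  with h \<open>s1 = s2\<close> show ?thesis by simp
qed

lemma root_no_Lam[simp]: "\<not> root_gcv (Lam t) x" by (simp add: root_gcv_iff)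
lemma root_no_App[simp]: "\<not> root_gcv (App t w) x" by (simp add: root_gcv_iff)

lemma Nc_no_Lam: "Nc root_gcv t x \<Longrightarrow> t = Lam s \<Longrightarrow> False"
  by (induction rule: Nc.induct) auto
lemma Yc_no_Lam: "Yc root_gcv t x \<Longrightarrow> t = Lam s \<Longrightarrow> False"
  by (induction rule: Yc.induct) (auto simp: root_gcv_iff)

lemma Yc_plugS: "is_S S \<Longrightarrow> Yc R x y \<Longrightarrow> Yc R (plug S x) (plug S y)"
  by (induction S) (auto intro: Yc.intros)
lemma Nc_plugS: "is_S S \<Longrightarrow> Nc R x y \<Longrightarrow> Nc R (plug S x) (plug S y)"
  by (induction S) (auto intro: Nc.intros)

lemma nest_s_Y:
  assumes "is_S S" "is_val v" "\<not> occ 0 s" "Yc root_gcv s s'"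
  shows "Yc root_gcv (plug S (lift (depth S) 0 (lower 0 s))) (plug S (lift (depth S) 0 (lower 0 s')))
    \<and> Yc root_gcv (ESub s' (plug S v)) (plug S (lift (depth S) 0 (lower 0 s')))"
proof
  show "Yc root_gcv (plug S (lift (depth S) 0 (lower 0 s))) (plug S (lift (depth S) 0 (lower 0 s')))"
    using assms by (intro Yc_plugS Yc_lift Yc_lower) auto
  have "\<not> occ 0 s'" using assms Yc_occ by blast
  then show "Yc root_gcv (ESub s' (plug S v)) (plug S (lift (depth S) 0 (lower 0 s')))"
    using assms by (intro Yroot) (auto simp: root_gcv_iff)
qed

lemma nest_s_N:
  assumes "is_S S" "is_val v" "\<not> occ 0 s" "Nc root_gcv s s'"
  shows "Nc root_gcv (plug S (lift (depth S) 0 (lower 0 s))) (plug S (lift (depth S) 0 (lower 0 s')))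
    \<and> Nc root_gcv (ESub s' (plug S v)) (plug S (lift (depth S) 0 (lower 0 s')))"
proof
  show "Nc root_gcv (plug S (lift (depth S) 0 (lower 0 s))) (plug S (lift (depth S) 0 (lower 0 s')))"
    using assms by (intro Nc_plugS Nc_lift Nc_lower) auto
  have "\<not> occ 0 s'" using assms Nc_occ by blast
  then show "Nc root_gcv (ESub s' (plug S v)) (plug S (lift (depth S) 0 (lower 0 s')))"
    using assms by (intro Nroot) (auto simp: root_gcv_iff)
qed

lemma ans_S_rep: "is_S S \<Longrightarrow> is_ans (plug S x) \<Longrightarrow> is_ans y \<Longrightarrow> is_ans (plug S y)"
  by (induction S) auto

lemma Yc_ans: "Yc root_gcv a a' \<Longrightarrow> is_ans a \<Longrightarrow> is_ans a'"
proof (induction rule: Yc.induct)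
  case (Yroot t u)
  then obtain s S v where h: "is_S S" "is_val v" "\<not> occ 0 s" "t = ESub s (plug S v)"
    "u = plug S (lift (depth S) 0 (lower 0 s))" unfolding root_gcv_iff by blast
  from Yroot.prems h have "is_ans s" "is_ans (plug S v)" by simp_all
  then have "is_ans (lift (depth S) 0 (lower 0 s))" by (intro ans_lift ans_lower)
  then show ?case using ans_S_rep[OF h(1) \<open>is_ans (plug S v)\<close>] h(5) by simp
qed auto

lemma nest_arg:
  "is_S S \<Longrightarrow> is_val v \<Longrightarrow> Yc root_gcv (plug S v) x \<Longrightarrow>
   \<exists>S' v'. is_S S' \<and> is_val v' \<and> x = plug S' v' \<and>
     (\<forall>r. is_ans r \<longrightarrow> Yc root_gcv (plug S (lift (depth S) 0 r)) (plug S' (lift (depth S') 0 r)))"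
proof (induction S arbitrary: x)
  case Hole
  then show ?case by (cases v) (auto dest: Yc_no_Lam)
next
  case (SubL S1 u)
  let ?d1 = "depth S1"
  from SubL.prems(3) show ?case
  proof (cases rule: Yc.cases)
    case (Yroot)
    then obtain S2 v2 where h: "is_S S2" "is_val v2" "\<not> occ 0 (plug S1 v)" "u = plug S2 v2"
      "x = plug S2 (lift (depth S2) 0 (lower 0 (plug S1 v)))" unfolding root_gcv_iff by auto
    let ?d2 = "depth S2"
    let ?S' = "comp S2 (liftC ?d2 0 (lowerC 0 S1))"
    let ?v' = "lift ?d2 ?d1 (lower ?d1 v)"
    have x: "x = plug ?S' ?v'" using h(5) by (simp add: lift_plug lower_plug)
    have "is_S ?S'" using SubL.prems h(1) by (auto intro: is_S_comp)
    moreover have "is_val ?v'" using SubL.prems by simp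
    moreover have "Yc root_gcv (plug (SubL S1 u) (lift (depth (SubL S1 u)) 0 r)) (plug ?S' (lift (depth ?S') 0 r))"
      if "is_ans r" for r
    proof -
      let ?y = "lift (Suc ?d1) 0 r"
      have ny: "\<not> occ ?d1 ?y" using T1b[of 0 ?d1 "Suc ?d1" r] by simp
      have "\<not> occ 0 (plug S1 ?y)"
      proof
        assume "occ 0 (plug S1 ?y)"
        then have "occ 0 (plug S1 v)" using OS[of S1 0 ?y v] SubL.prems ny by simp
        with h(3) show False by simp
      qed
      then have "root_gcv (ESub (plug S1 ?y) (plug S2 v2))
          (plug S2 (lift ?d2 0 (lower 0 (plug S1 ?y))))"
        unfolding root_gcv_iff using h(1,2) by blast
      moreover have "lift ?d2 0 (lower 0 (plug S1 ?y)) = plug (liftC ?d2 0 (lowerC 0 S1)) (lift (?d2 + ?d1) 0 r)"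
      proof -
        have "lift ?d2 0 (lower 0 (plug S1 ?y)) = plug (liftC ?d2 0 (lowerC 0 S1)) (lift ?d2 ?d1 (lower ?d1 ?y))"
          by (simp add: lift_plug lower_plug)
        also have "lower ?d1 ?y = lift ?d1 0 r" using T7[of ?d1 0 r] by simp
        also have "lift ?d2 ?d1 (lift ?d1 0 r) = lift (?d2 + ?d1) 0 r" using T8[of ?d2 ?d1 0 r] by simp
        finally show ?thesis .
      qed
      ultimately show ?thesis using h(4) by (auto intro: Yc.Yroot)
    qed
    ultimately show ?thesis using x by (intro exI[of _ ?S'] exI[of _ ?v']) simp
  next
    case (Ysubl t0 y w0)
    then have e: "t0 = plug S1 v" "w0 = u" "Yc root_gcv (plug S1 v) y" "x = ESub y u" by auto
    have s1: "is_S S1" using SubL.prems(1) by simp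
    have ex: "\<exists>S' v'. is_S S' \<and> is_val v' \<and> y = plug S' v' \<and>
      (\<forall>r. is_ans r \<longrightarrow> Yc root_gcv (plug S1 (lift ?d1 0 r)) (plug S' (lift (depth S') 0 r)))"
      using SubL.IH[OF s1 SubL.prems(2) e(3)] .
    then obtain S' v' where h: "is_S S'" "is_val v'" "y = plug S' v'"
      and h4': "\<forall>r. is_ans r \<longrightarrow> Yc root_gcv (plug S1 (lift ?d1 0 r)) (plug S' (lift (depth S') 0 r))"
      by (elim exE conjE) (rule that)
    note h4 = h4'[rule_format]
    have "Yc root_gcv (plug (SubL S1 u) (lift (depth (SubL S1 u)) 0 r)) (plug (SubL S' u) (lift (depth (SubL S' u)) 0 r))"
      if "is_ans r" for r
    proof -
      have "Yc root_gcv (plug S1 (lift ?d1 0 (lift 1 0 r))) (plug S' (lift (depth S') 0 (lift 1 0 r)))"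
        using h4 ans_lift that by blast
      then have "Yc root_gcv (plug S1 (lift (Suc ?d1) 0 r)) (plug S' (lift (Suc (depth S')) 0 r))"
        by (simp add: T9)
      then show ?thesis by (simp add: Yc.Ysubl)
    qed
    moreover have "is_S (SubL S' u)" "x = plug (SubL S' u) v'" using h e by auto
    ultimately show ?thesis using h(2) by (intro exI[of _ "SubL S' u"] exI[of _ v']) simp
  next
    case (Ysubr a t0 u')
    then have e: "a = plug S1 v" "t0 = u" "Yc root_gcv u u'" "x = ESub (plug S1 v) u'" "is_ans (plug S1 v)"
      by auto
    have "Yc root_gcv (plug (SubL S1 u) (lift (depth (SubL S1 u)) 0 r)) (plug (SubL S1 u') (lift (depth (SubL S1 u')) 0 r))"
      if "is_ans r" for r
    proof -
      have "is_ans (plug S1 (lift (Suc ?d1) 0 r))"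
        using ans_S_rep[of S1 v] SubL.prems e ans_lift that by auto
      then show ?thesis using e by (auto intro: Yc.Ysubr)
    qed
    then show ?thesis using SubL.prems e by (intro exI[of _ "SubL S1 u'"] exI[of _ v]) auto
  next
    case (Yappl t0 u0 w0) then show ?thesis by simp
  qed
qed auto

lemma H_root_subl_Y:
  assumes "root_gcv (ESub s w) u1" "Yc root_gcv s s'"
  shows "\<exists>z. Yc root_gcv u1 z \<and> Yc root_gcv (ESub s' w) z"
proof -
  from assms(1) obtain S v where h: "is_S S" "is_val v" "\<not> occ 0 s" "w = plug S v"
    "u1 = plug S (lift (depth S) 0 (lower 0 s))" unfolding root_gcv_iff by auto
  from nest_s_Y[OF h(1,2,3) assms(2)] h(4,5) show ?thesis by blast
qed

lemma H_root_subl_N: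
  assumes "root_gcv (ESub s w) u1" "Nc root_gcv s s'"
  shows "\<exists>z. Nc root_gcv u1 z \<and> Nc root_gcv (ESub s' w) z"
proof -
  from assms(1) obtain S v where h: "is_S S" "is_val v" "\<not> occ 0 s" "w = plug S v"
    "u1 = plug S (lift (depth S) 0 (lower 0 s))" unfolding root_gcv_iff by auto
  from nest_s_N[OF h(1,2,3) assms(2)] h(4,5) show ?thesis by blast
qed

lemma H_root_subr:
  assumes "root_gcv (ESub a w) u1" "is_ans a" "Yc root_gcv w w'"
  shows "\<exists>z. Yc root_gcv u1 z \<and> Yc root_gcv (ESub a w') z"
proof -
  from assms(1) obtain S v where h: "is_S S" "is_val v" "\<not> occ 0 a" "w = plug S v"
    "u1 = plug S (lift (depth S) 0 (lower 0 a))" unfolding root_gcv_iff by auto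
  have ex: "\<exists>S' v'. is_S S' \<and> is_val v' \<and> w' = plug S' v' \<and>
     (\<forall>r. is_ans r \<longrightarrow> Yc root_gcv (plug S (lift (depth S) 0 r)) (plug S' (lift (depth S') 0 r)))"
    using nest_arg[OF h(1,2)] assms(3) h(4) by simp
  then obtain S' v' where h2: "is_S S'" "is_val v'" "w' = plug S' v'"
    and h3: "\<forall>r. is_ans r \<longrightarrow> Yc root_gcv (plug S (lift (depth S) 0 r)) (plug S' (lift (depth S') 0 r))"
    by (elim exE conjE) (rule that)
  have "is_ans (lower 0 a)" using assms(2) by (rule ans_lower)
  then have 1: "Yc root_gcv u1 (plug S' (lift (depth S') 0 (lower 0 a)))" using h3 h(5) by simp
  have "root_gcv (ESub a w') (plug S' (lift (depth S') 0 (lower 0 a)))"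
    unfolding root_gcv_iff using h2 h(3) by blast
  then have 2: "Yc root_gcv (ESub a w') (plug S' (lift (depth S') 0 (lower 0 a)))" by (rule Yc.Yroot)
  from 1 2 show ?thesis by blast
qed

lemma H_subl_subr:
  assumes "Yc root_gcv a a'" "is_ans a" "Yc root_gcv w w'"
  shows "Yc root_gcv (ESub a' w) (ESub a' w') \<and> Yc root_gcv (ESub a w') (ESub a' w')"
proof
  have "is_ans a'" using Yc_ans assms(1,2) by blast
  then show "Yc root_gcv (ESub a' w) (ESub a' w')" using assms(3) by (rule Yc.Ysubr)
  show "Yc root_gcv (ESub a w') (ESub a' w')" using assms(1) by (rule Yc.Ysubl)
qed

lemma Nc_ESub_inv: "Nc R (ESub t w) u2 \<Longrightarrow> R (ESub t w) u2 \<or> (\<exists>u'. u2 = ESub u' w \<and> Nc R t u')"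
  by (erule Nc.cases) auto
lemma Nc_App_inv: "Nc R (App t w) u2 \<Longrightarrow> R (App t w) u2 \<or> (\<exists>u'. u2 = App u' w \<and> Nc R t u')"
  by (erule Nc.cases) auto
lemma Yc_ESub_inv: "Yc R (ESub t w) u2 \<Longrightarrow> R (ESub t w) u2 \<or> (\<exists>u'. u2 = ESub u' w \<and> Yc R t u')
   \<or> (is_ans t \<and> (\<exists>w'. u2 = ESub t w' \<and> Yc R w w'))"
  by (erule Yc.cases) auto
lemma Yc_App_inv: "Yc R (App t w) u2 \<Longrightarrow> R (App t w) u2 \<or> (\<exists>u'. u2 = App u' w \<and> Nc R t u')"
  by (erule Yc.cases) auto

lemma root_ESub: "root_gcv t u \<Longrightarrow> \<exists>s w. t = ESub s w"
  unfolding root_gcv_iff by auto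

lemma Nc_diamond:
  "Nc root_gcv t u1 \<Longrightarrow> Nc root_gcv t u2 \<Longrightarrow> u1 = u2 \<or> (\<exists>z. Nc root_gcv u1 z \<and> Nc root_gcv u2 z)"
proof (induction arbitrary: u2 rule: Nc.induct)
  case (Nroot t u1)
  note r1 = Nroot.hyps
  from root_ESub[OF r1] obtain s w where t: "t = ESub s w" by blast
  from Nc_ESub_inv[OF Nroot.prems[unfolded t]] show ?case
  proof (elim disjE exE conjE)
    assume "root_gcv (ESub s w) u2" then show ?thesis using root_det r1 t by blast
  next
    fix s' assume "u2 = ESub s' w" "Nc root_gcv s s'"
    then show ?thesis using H_root_subl_N[of s w u1 s'] r1 t by auto
  qed
next
  case (Nsubl t u w)
  from Nc_ESub_inv[OF Nsubl.prems] show ?case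
  proof (elim disjE exE conjE)
    assume "root_gcv (ESub t w) u2"
    then show ?thesis using H_root_subl_N[of t w u2 u] Nsubl.hyps by auto
  next
    fix u' assume "u2 = ESub u' w" "Nc root_gcv t u'"
    then show ?thesis using Nsubl.IH[of u'] by (auto intro: Nc.Nsubl)
  qed
next
  case (Nappl t u w)
  from Nc_App_inv[OF Nappl.prems] show ?case
  proof (elim disjE exE conjE)
    assume "root_gcv (App t w) u2" then show ?thesis by simp
  next
    fix u' assume "u2 = App u' w" "Nc root_gcv t u'"
    then show ?thesis using Nappl.IH[of u'] by (auto intro: Nc.Nappl)
  qed
qed

lemma Yc_diamond:
  "Yc root_gcv t u1 \<Longrightarrow> Yc root_gcv t u2 \<Longrightarrow> u1 = u2 \<or> (\<exists>z. Yc root_gcv u1 z \<and> Yc root_gcv u2 z)"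
proof (induction arbitrary: u2 rule: Yc.induct)
  case (Yroot t u1)
  note r1 = Yroot.hyps
  from root_ESub[OF r1] obtain s w where t: "t = ESub s w" by blast
  from Yc_ESub_inv[OF Yroot.prems[unfolded t]] show ?case
  proof (elim disjE exE conjE)
    assume "root_gcv (ESub s w) u2" then show ?thesis using root_det r1 t by blast
  next
    fix s' assume "u2 = ESub s' w" "Yc root_gcv s s'"
    then show ?thesis using H_root_subl_Y[of s w u1 s'] r1 t by auto
  next
    fix w' assume "is_ans s" "u2 = ESub s w'" "Yc root_gcv w w'"
    then show ?thesis using H_root_subr[of s w u1 w'] r1 t by auto
  qed
next
  case (Ysubl t u w)
  from Yc_ESub_inv[OF Ysubl.prems] show ?case
  proof (elim disjE exE conjE)
    assume "root_gcv (ESub t w) u2"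
    then show ?thesis using H_root_subl_Y[of t w u2 u] Ysubl.hyps by auto
  next
    fix u' assume "u2 = ESub u' w" "Yc root_gcv t u'"
    then show ?thesis using Ysubl.IH[of u'] by (auto intro: Yc.Ysubl)
  next
    fix w' assume "is_ans t" "u2 = ESub t w'" "Yc root_gcv w w'"
    then show ?thesis using H_subl_subr[OF Ysubl.hyps(1)] by blast
  qed
next
  case (Ysubr a t u)
  from Yc_ESub_inv[OF Ysubr.prems] show ?case
  proof (elim disjE exE conjE)
    assume "root_gcv (ESub a t) u2"
    then show ?thesis using H_root_subr[of a t u2 u] Ysubr.hyps by auto
  next
    fix a' assume "u2 = ESub a' t" "Yc root_gcv a a'"
    then show ?thesis using H_subl_subr[of a a' t u] Ysubr.hyps by blast
  next
    fix u' assume "is_ans a" "u2 = ESub a u'" "Yc root_gcv t u'"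
    then show ?thesis using Ysubr.IH[of u'] Ysubr.hyps(1) by (auto intro: Yc.Ysubr)
  qed
next
  case (Yappl t u w)
  from Yc_App_inv[OF Yappl.prems] show ?case
  proof (elim disjE exE conjE)
    assume "root_gcv (App t w) u2" then show ?thesis by simp
  next
    fix u' assume "u2 = App u' w" "Nc root_gcv t u'"
    then show ?thesis using Nc_diamond[OF Yappl.hyps] by (auto intro: Yc.Yappl)
  qed
qed

lemma diamond_ygcv: "diamond ygcv"
  unfolding diamond_def ygcv_Yc using Yc_diamond by blast

theorem proposition11p4:
  shows "deterministic ym \<and> deterministic yeAY \<and> deterministic yeYN \<and> diamond ygcv"
  using det_ym det_yeAY det_yeYN diamond_ygcv by blast

end
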